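(* Let $R$ be a locally bounded $K$-category, $X\in\mathrm{Mod}(R)$, $M,N\in\mathrm{mod}(R)$, and let $f:M\to N$ and $\alpha:X\to N$ be $R$-homomorphisms. Suppose that $\mathrm{Im}\,\mathrm{Hom}_R( *,\alpha)\subseteq\mathrm{Im}\,\mathrm{Hom}_R( *,f)$ as subfunctors of $\mathrm{Hom}_R( *,N)$ on $\mathrm{mod}(R)$, i.e. for every $L\in\mathrm{mod}(R)$ and every $R$-homomorphism $\gamma:L\to X$ there exists $h:L\to M$ with $\alpha\gamma=fh$. Then $\alpha$ factors through $f$, i.e. $\alpha=f\beta$ for some $R$-homomorphism $\beta:X\to M$.
   Context: $K$ is an algebraically closed field. A $K$-category $R$ is locally bounded if distinct objects are non-isomorphic, endomorphism algebras of objects are local, and for each object $x$, $\sum_y\dim_K R(x,y)<\infty$ and $\sum_y\dim_K R(y,x)<\infty$. An $R$-module is a $K$-linear functor $R^{op}\to\mathrm{Mod}(K)$; $\mathrm{Mod}(R)$ consists of $R$-modules $X$ with $\dim_K X(x)<\infty$ for all objects $x$, and $\mathrm{mod}(R)$ of those with $\sum_x\dim_K M(x)<\infty$. *)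

theory Defs
  imports "Jordan_Normal_Form.Matrix" "HOL-Computational_Algebra.Polynomial"
begin

text \<open>Coordinate encoding. A K-category with finite-dimensional morphism spaces:
  objects are the elements of type 'o; the morphism space R(x,y) (morphisms x \<rightarrow> y)
  is K^(hdim x y); composition cmp x y z b a = b \<circ> a for a : x \<rightarrow> y, b : y \<rightarrow> z;
  idn x is the identity of x.\<close>

definition alg_closed :: "'k::field itself \<Rightarrow> bool" where
  "alg_closed _ \<longleftrightarrow> (\<forall>p :: 'k poly. 0 < degree p \<longrightarrow> (\<exists>z. poly p z = 0))"

record ('o,'k) kcat =
  hdim :: "'o \<Rightarrow> 'o \<Rightarrow> nat"
  cmp  :: "'o \<Rightarrow> 'o \<Rightarrow> 'o \<Rightarrow> 'k vec \<Rightarrow> 'k vec \<Rightarrow> 'k vec"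
  idn  :: "'o \<Rightarrow> 'k vec"

definition Hom :: "('o,'k) kcat \<Rightarrow> 'o \<Rightarrow> 'o \<Rightarrow> 'k vec set" where
  "Hom R x y = carrier_vec (hdim R x y)"

definition is_kcat :: "('o,'k::field) kcat \<Rightarrow> bool" where
  "is_kcat R \<longleftrightarrow>
    (\<forall>x y z a b. a \<in> Hom R x y \<longrightarrow> b \<in> Hom R y z \<longrightarrow> cmp R x y z b a \<in> Hom R x z) \<and>
    (\<forall>x y z a a' b. a \<in> Hom R x y \<longrightarrow> a' \<in> Hom R x y \<longrightarrow> b \<in> Hom R y z \<longrightarrow>
        cmp R x y z b (a + a') = cmp R x y z b a + cmp R x y z b a') \<and>
    (\<forall>x y z a b b'. a \<in> Hom R x y \<longrightarrow> b \<in> Hom R y z \<longrightarrow> b' \<in> Hom R y z \<longrightarrow>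
        cmp R x y z (b + b') a = cmp R x y z b a + cmp R x y z b' a) \<and>
    (\<forall>x y z a b c. a \<in> Hom R x y \<longrightarrow> b \<in> Hom R y z \<longrightarrow>
        cmp R x y z b (c \<cdot>\<^sub>v a) = c \<cdot>\<^sub>v cmp R x y z b a \<and>
        cmp R x y z (c \<cdot>\<^sub>v b) a = c \<cdot>\<^sub>v cmp R x y z b a) \<and>
    (\<forall>w x y z a b c. a \<in> Hom R w x \<longrightarrow> b \<in> Hom R x y \<longrightarrow> c \<in> Hom R y z \<longrightarrow>
        cmp R w y z c (cmp R w x y b a) = cmp R w x z (cmp R x y z c b) a) \<and>
    (\<forall>x. idn R x \<in> Hom R x x) \<and>
    (\<forall>x y a. a \<in> Hom R x y \<longrightarrow> cmp R x y y (idn R y) a = a \<and> cmp R x x y a (idn R x) = a)"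

definition is_iso_pair :: "('o,'k) kcat \<Rightarrow> 'o \<Rightarrow> 'o \<Rightarrow> 'k vec \<Rightarrow> 'k vec \<Rightarrow> bool" where
  "is_iso_pair R x y a b \<longleftrightarrow> a \<in> Hom R x y \<and> b \<in> Hom R y x \<and>
     cmp R x y x b a = idn R x \<and> cmp R y x y a b = idn R y"

definition is_unit_end :: "('o,'k) kcat \<Rightarrow> 'o \<Rightarrow> 'k vec \<Rightarrow> bool" where
  "is_unit_end R x u \<longleftrightarrow> (\<exists>v. is_iso_pair R x x u v)"

text \<open>Local algebra: 1 \<noteq> 0 and the non-units are closed under addition.\<close>
definition local_end :: "('o,'k::field) kcat \<Rightarrow> 'o \<Rightarrow> bool" where
  "local_end R x \<longleftrightarrow> idn R x \<noteq> 0\<^sub>v (hdim R x x) \<and>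
     (\<forall>a \<in> Hom R x x. \<forall>b \<in> Hom R x x.
        \<not> is_unit_end R x a \<longrightarrow> \<not> is_unit_end R x b \<longrightarrow> \<not> is_unit_end R x (a + b))"

definition locally_bounded :: "('o,'k::field) kcat \<Rightarrow> bool" where
  "locally_bounded R \<longleftrightarrow> is_kcat R \<and>
     (\<forall>x y. x \<noteq> y \<longrightarrow> \<not> (\<exists>a b. is_iso_pair R x y a b)) \<and>
     (\<forall>x. local_end R x) \<and>
     (\<forall>x. finite {y. hdim R x y \<noteq> 0} \<and> finite {y. hdim R y x \<noteq> 0})"

text \<open>An R-module (contravariant K-linear functor R^op \<rightarrow> Mod K) with finite-dimensional
  values X(x) = K^(mdim x); for a : x \<rightarrow> y, mact x y a : X(y) \<rightarrow> X(x) is a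
  (mdim x) \<times> (mdim y) matrix acting on column vectors.\<close>
record ('o,'k) rmod =
  mdim :: "'o \<Rightarrow> nat"
  mact :: "'o \<Rightarrow> 'o \<Rightarrow> 'k vec \<Rightarrow> 'k mat"

text \<open>Objects of Mod(R).\<close>
definition in_Mod :: "('o,'k::field) kcat \<Rightarrow> ('o,'k) rmod \<Rightarrow> bool" where
  "in_Mod R X \<longleftrightarrow>
    (\<forall>x y a. a \<in> Hom R x y \<longrightarrow> mact X x y a \<in> carrier_mat (mdim X x) (mdim X y)) \<and>
    (\<forall>x y a a'. a \<in> Hom R x y \<longrightarrow> a' \<in> Hom R x y \<longrightarrow>
        mact X x y (a + a') = mact X x y a + mact X x y a') \<and>
    (\<forall>x y a c. a \<in> Hom R x y \<longrightarrow> mact X x y (c \<cdot>\<^sub>v a) = c \<cdot>\<^sub>m mact X x y a) \<and>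
    (\<forall>x. mact X x x (idn R x) = 1\<^sub>m (mdim X x)) \<and>
    (\<forall>x y z a b. a \<in> Hom R x y \<longrightarrow> b \<in> Hom R y z \<longrightarrow>
        mact X x z (cmp R x y z b a) = mact X x y a * mact X y z b)"

text \<open>Objects of mod(R): total dimension finite.\<close>
definition in_mod :: "('o,'k::field) kcat \<Rightarrow> ('o,'k) rmod \<Rightarrow> bool" where
  "in_mod R X \<longleftrightarrow> in_Mod R X \<and> finite {x. mdim X x \<noteq> 0}"

text \<open>R-homomorphisms X \<rightarrow> Y: families of K-linear maps f x : X(x) \<rightarrow> Y(x) (matrices)
  natural in x.\<close>
definition is_hom :: "('o,'k::field) kcat \<Rightarrow> ('o,'k) rmod \<Rightarrow> ('o,'k) rmod \<Rightarrow> ('o \<Rightarrow> 'k mat) \<Rightarrow> bool" where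
  "is_hom R X Y f \<longleftrightarrow>
    (\<forall>x. f x \<in> carrier_mat (mdim Y x) (mdim X x)) \<and>
    (\<forall>x y a. a \<in> Hom R x y \<longrightarrow> f x * mact X x y a = mact Y x y a * f y)"

end

theory Submission
  imports Defs "Jordan_Normal_Form.DL_Rank"
begin

lemma (in vec_space) subspace_basis_mat:
  fixes W :: "'a vec set"
  assumes W: "W \<subseteq> carrier_vec n" and z: "0\<^sub>v n \<in> W"
    and add: "\<And>u w. u \<in> W \<Longrightarrow> w \<in> W \<Longrightarrow> u + w \<in> W"
    and sm: "\<And>c w. w \<in> W \<Longrightarrow> c \<cdot>\<^sub>v w \<in> W"
  shows "\<exists>d B. B \<in> carrier_mat n d \<and> (\<forall>v\<in>carrier_vec d. B *\<^sub>v v = 0\<^sub>v n \<longrightarrow> v = 0\<^sub>v d)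
     \<and> W = {B *\<^sub>v v | v. v \<in> carrier_vec d}"
proof -
  have subm: "submodule class_ring W V"
    unfolding submodule_def using W z add sm by (auto simp: vec_module)
  let ?P = "\<lambda>T. T \<subseteq> W \<and> lin_indpt T"
  have bnd: "\<And>T. ?P T \<Longrightarrow> finite T \<and> card T \<le> dim"
    using li_le_dim W by (meson fin_dim order_trans cV)
  have "?P {}" by (simp add: lin_dep_def)
  then obtain A where fA: "finite A" and mA: "maximal A ?P"
    using maximal_exists[of ?P dim "{}"] bnd by blast
  have AW: "A \<subseteq> W" and liA: "lin_indpt A" using mA unfolding maximal_def by auto
  have AC: "A \<subseteq> carrier_vec n" using AW W by auto
  have spA: "span A \<subseteq> W" using span_is_subset[OF AW subm] .
  have Wsp: "W \<subseteq> span A"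
  proof
    fix w assume w: "w \<in> W"
    show "w \<in> span A"
    proof (rule ccontr)
      assume ns: "w \<notin> span A"
      have wA: "w \<notin> A" using ns span_mem[OF _ ] AC by (metis cV)
      have "lin_indpt (A \<union> {w})" using lin_dep_iff_in_span[OF _ liA _ wA] ns AC w W by auto
      moreover have "A \<union> {w} \<subseteq> W" using AW w by auto
      ultimately have "A \<union> {w} = A" using mA unfolding maximal_def by blast
      then show False using wA by auto
    qed
  qed
  obtain bs where bs: "distinct bs" "set bs = A" using finite_distinct_list[OF fA] by blast
  define B where "B = mat_of_cols n bs"
  have Bc: "B \<in> carrier_mat n (length bs)" unfolding B_def by simp
  have cB: "cols B = bs" unfolding B_def using bs AC by (simp add: cols_mat_of_cols)
  have inj: "\<forall>v\<in>carrier_vec (length bs). B *\<^sub>v v = 0\<^sub>v n \<longrightarrow> v = 0\<^sub>v (length bs)"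
  proof (intro ballI impI, rule ccontr)
    fix v assume v: "v \<in> carrier_vec (length bs)" "B *\<^sub>v v = 0\<^sub>v n" "v \<noteq> 0\<^sub>v (length bs)"
    have "lin_dep (set (cols B))" using lin_depI[OF Bc v(1) v(3) v(2)] cB bs by auto
    then show False using liA cB bs by simp
  qed
  have dimbs: "\<forall>w\<in>set bs. dim_vec w = n" using AC bs by auto
  have sl: "span A = span_list bs" using span_list_as_span[of bs] AC bs by auto
  have "W = {B *\<^sub>v v | v. v \<in> carrier_vec (length bs)}"
  proof
    show "W \<subseteq> {B *\<^sub>v v | v. v \<in> carrier_vec (length bs)}"
    proof
      fix w assume "w \<in> W"
      then have "w \<in> span_list bs" using Wsp sl by auto
      then obtain c where "w = lincomb_list c bs" unfolding span_list_def by auto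
      then have "w = B *\<^sub>v vec (length bs) c" using lincomb_list_as_mat_mult[OF dimbs] B_def by simp
      then show "w \<in> {B *\<^sub>v v | v. v \<in> carrier_vec (length bs)}" by auto
    qed
    show "{B *\<^sub>v v | v. v \<in> carrier_vec (length bs)} \<subseteq> W"
    proof clarify
      fix v :: "'a vec" assume v: "v \<in> carrier_vec (length bs)"
      have "vec (length bs) (\<lambda>i. v $ i) = v" using v by auto
      then have "B *\<^sub>v v = lincomb_list (\<lambda>i. v $ i) bs" using lincomb_list_as_mat_mult[OF dimbs] B_def by simp
      then have "B *\<^sub>v v \<in> span_list bs" unfolding span_list_def by auto
      then show "B *\<^sub>v v \<in> W" using spA sl by auto
    qed
  qed
  then show ?thesis using Bc inj by blast
qed


lemma basis_mat:
  fixes W :: "'a::field vec set"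
  assumes "W \<subseteq> carrier_vec n" "0\<^sub>v n \<in> W"
    "\<And>u w. u \<in> W \<Longrightarrow> w \<in> W \<Longrightarrow> u + w \<in> W"
    "\<And>c w. w \<in> W \<Longrightarrow> c \<cdot>\<^sub>v w \<in> W"
  shows "\<exists>d B. B \<in> carrier_mat n d \<and> (\<forall>v\<in>carrier_vec d. B *\<^sub>v v = 0\<^sub>v n \<longrightarrow> v = 0\<^sub>v d)
     \<and> W = {B *\<^sub>v v | v. v \<in> carrier_vec d}"
  using vec_space.subspace_basis_mat[of W n] assms by blast

lemma inj_mat_cancel:
  fixes B :: "'a::field mat"
  assumes B: "B \<in> carrier_mat n d" and inj: "\<forall>v\<in>carrier_vec d. B *\<^sub>v v = 0\<^sub>v n \<longrightarrow> v = 0\<^sub>v d"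
    and C: "C \<in> carrier_mat d m" and C': "C' \<in> carrier_mat d m" and eq: "B * C = B * C'"
  shows "C = C'"
proof (rule eq_matI)
  show "dim_row C = dim_row C'" "dim_col C = dim_col C'" using C C' by auto
  fix i j assume i: "i < dim_row C'" and j: "j < dim_col C'"
  have jm: "j < m" using j C' by auto
  have "B *\<^sub>v col C j = B *\<^sub>v col C' j"
    using col_mult2[OF B C jm] col_mult2[OF B C' jm] eq by simp
  then have "B *\<^sub>v (col C j - col C' j) = 0\<^sub>v n"
    using B C C' jm by (simp add: mult_minus_distrib_mat_vec)
  moreover have "col C j - col C' j \<in> carrier_vec d" using C C' jm by auto
  ultimately have "col C j - col C' j = 0\<^sub>v d" using inj by blast
  then have "(col C j - col C' j) $ i = 0" using i C' by simp
  then show "C $$ (i, j) = C' $$ (i, j)" using i j C C' by auto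
qed

lemma factor_mat:
  fixes B :: "'a::field mat"
  assumes B: "B \<in> carrier_mat n d" and A: "A \<in> carrier_mat n m"
    and cols: "\<And>j. j < m \<Longrightarrow> \<exists>v\<in>carrier_vec d. col A j = B *\<^sub>v v"
  shows "\<exists>C\<in>carrier_mat d m. B * C = A"
proof -
  obtain c where c: "\<And>j. j < m \<Longrightarrow> c j \<in> carrier_vec d \<and> col A j = B *\<^sub>v c j"
    using cols by metis
  define C where "C = mat_of_cols d (map c [0..<m])"
  have Cc: "C \<in> carrier_mat d m" unfolding C_def using mat_of_cols_carrier(1)[of d "map c [0..<m]"] by simp
  have colC: "\<And>j. j < m \<Longrightarrow> col C j = c j" unfolding C_def using c
    by (simp add: col_mat_of_cols)
  have "B * C = A"
  proof (rule eq_matI)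
    show "dim_row (B * C) = dim_row A" "dim_col (B * C) = dim_col A" using B Cc A by auto
    fix i j assume i: "i < dim_row A" and j: "j < dim_col A"
    have jm: "j < m" using j A by auto
    have "col (B * C) j = col A j" using col_mult2[OF B Cc jm] colC[OF jm] c[OF jm] by simp
    then have "col (B * C) j $ i = col A j $ i" by simp
    then show "(B * C) $$ (i, j) = A $$ (i, j)" using i j A B Cc by auto
  qed
  then show ?thesis using Cc by blast
qed


lemma kc_cmp: "is_kcat R \<Longrightarrow> a \<in> Hom R x y \<Longrightarrow> b \<in> Hom R y z \<Longrightarrow> cmp R x y z b a \<in> Hom R x z"
  by (simp add: is_kcat_def)
lemma kc_idn: "is_kcat R \<Longrightarrow> idn R x \<in> Hom R x x"
  by (simp add: is_kcat_def)

lemma mod_carrier: "in_Mod R X \<Longrightarrow> a \<in> Hom R x y \<Longrightarrow> mact X x y a \<in> carrier_mat (mdim X x) (mdim X y)"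
  unfolding in_Mod_def by blast
lemma mod_add: "in_Mod R X \<Longrightarrow> a \<in> Hom R x y \<Longrightarrow> a' \<in> Hom R x y \<Longrightarrow> mact X x y (a + a') = mact X x y a + mact X x y a'"
  unfolding in_Mod_def by blast
lemma mod_smult: "in_Mod R X \<Longrightarrow> a \<in> Hom R x y \<Longrightarrow> mact X x y (c \<cdot>\<^sub>v a) = c \<cdot>\<^sub>m mact X x y a"
  unfolding in_Mod_def by blast
lemma mod_idn: "in_Mod R X \<Longrightarrow> mact X x x (idn R x) = 1\<^sub>m (mdim X x)"
  unfolding in_Mod_def by blast
lemma mod_cmp: "in_Mod R X \<Longrightarrow> a \<in> Hom R x y \<Longrightarrow> b \<in> Hom R y z \<Longrightarrow>
        mact X x z (cmp R x y z b a) = mact X x y a * mact X y z b"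
  unfolding in_Mod_def by blast

lemma mod_zero_hom:
  assumes X: "in_Mod R X" and a: "a \<in> Hom R x y" and h: "hdim R x y = 0"
  shows "mact X x y a = 0\<^sub>m (mdim X x) (mdim X y)"
proof -
  have "a = 0 \<cdot>\<^sub>v a" using a h unfolding Hom_def by (intro eq_vecI) auto
  then have "mact X x y a = 0 \<cdot>\<^sub>m mact X x y a" using mod_smult[OF X a, of 0] by simp
  also have "\<dots> = 0\<^sub>m (mdim X x) (mdim X y)" using mod_carrier[OF X a] by (intro eq_matI) auto
  finally show ?thesis .
qed

inductive_set Wsp :: "('o,'k::field) kcat \<Rightarrow> ('o,'k) rmod \<Rightarrow> 'o set \<Rightarrow> 'o \<Rightarrow> 'k vec set"
  for R X T z where
  W0: "0\<^sub>v (mdim X z) \<in> Wsp R X T z"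
| Wg: "x \<in> T \<Longrightarrow> a \<in> Hom R z x \<Longrightarrow> u \<in> carrier_vec (mdim X x) \<Longrightarrow> mact X z x a *\<^sub>v u \<in> Wsp R X T z"
| Wadd: "v \<in> Wsp R X T z \<Longrightarrow> w \<in> Wsp R X T z \<Longrightarrow> v + w \<in> Wsp R X T z"

lemma Wsp_carrier:
  assumes X: "in_Mod R X" and v: "v \<in> Wsp R X T z"
  shows "v \<in> carrier_vec (mdim X z)"
  using v by induct (auto dest: mod_carrier[OF X])

lemma Wsp_smult:
  assumes X: "in_Mod R X" and v: "v \<in> Wsp R X T z"
  shows "c \<cdot>\<^sub>v v \<in> Wsp R X T z"
  using v
proof induct
  case W0
  have "c \<cdot>\<^sub>v 0\<^sub>v (mdim X z) = 0\<^sub>v (mdim X z)" by (intro eq_vecI) auto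
  then show ?case using Wsp.W0 by metis
next
  case (Wg x a u)
  have "c \<cdot>\<^sub>v (mact X z x a *\<^sub>v u) = mact X z x a *\<^sub>v (c \<cdot>\<^sub>v u)"
    using mult_mat_vec[OF mod_carrier[OF X Wg(2)] Wg(3)] by simp
  then show ?case using Wsp.Wg[OF Wg(1,2)] Wg(3) by simp
next
  case (Wadd v w)
  have "c \<cdot>\<^sub>v (v + w) = c \<cdot>\<^sub>v v + c \<cdot>\<^sub>v w"
    using Wsp_carrier[OF X Wadd(1)] Wsp_carrier[OF X Wadd(3)] by (simp add: smult_add_distrib_vec)
  then show ?case using Wsp.Wadd Wadd by simp
qed

lemma Wsp_act:
  assumes R: "is_kcat R" and X: "in_Mod R X" and b: "b \<in> Hom R z' z" and v: "v \<in> Wsp R X T z"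
  shows "mact X z' z b *\<^sub>v v \<in> Wsp R X T z'"
  using v
proof induct
  case W0
  have "mact X z' z b *\<^sub>v 0\<^sub>v (mdim X z) = 0\<^sub>v (mdim X z')" using mod_carrier[OF X b] by (intro eq_vecI) auto
  then show ?case using Wsp.W0 by metis
next
  case (Wg x a u)
  have "mact X z' z b *\<^sub>v (mact X z x a *\<^sub>v u) = mact X z' x (cmp R z' z x a b) *\<^sub>v u"
    using assoc_mult_mat_vec[OF mod_carrier[OF X b] mod_carrier[OF X Wg(2)] Wg(3)]
      mod_cmp[OF X b Wg(2)] by simp
  then show ?case using Wsp.Wg[OF Wg(1) kc_cmp[OF R b Wg(2)] Wg(3)] by simp
next
  case (Wadd v w)
  then show ?case
    using Wsp_carrier[OF X Wadd(1)] Wsp_carrier[OF X Wadd(3)] mod_carrier[OF X b]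
    by (simp add: mult_add_distrib_mat_vec Wsp.Wadd)
qed

lemma Wsp_T:
  fixes X :: "('o,'k::field) rmod"
  assumes R: "is_kcat R" and X: "in_Mod R X" and z: "z \<in> T"
  shows "Wsp R X T z = carrier_vec (mdim X z)"
proof
  show "Wsp R X T z \<subseteq> carrier_vec (mdim X z)" using Wsp_carrier[OF X] by blast
  show "carrier_vec (mdim X z) \<subseteq> Wsp R X T z"
  proof
    fix u :: "'k vec" assume u: "u \<in> carrier_vec (mdim X z)"
    have "mact X z z (idn R z) *\<^sub>v u = u" using mod_idn[OF X] u by simp
    then show "u \<in> Wsp R X T z" using Wsp.Wg[OF z kc_idn[OF R] u] by simp
  qed
qed

lemma Wsp_zero:
  assumes X: "in_Mod R X" and h: "\<forall>x\<in>T. hdim R z x = 0" and v: "v \<in> Wsp R X T z"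
  shows "v = 0\<^sub>v (mdim X z)"
  using v
proof induct
  case (Wg x a u)
  then show ?case using mod_zero_hom[OF X Wg(2)] h by (intro eq_vecI) auto
qed auto


lemma mult_unit_col:
  fixes B :: "'a::field mat"
  assumes B: "B \<in> carrier_mat n d" and j: "j < d"
  shows "B *\<^sub>v unit_vec d j = col B j"
proof (rule eq_vecI)
  fix i assume i: "i < dim_vec (col B j)"
  have "row B i \<in> carrier_vec d" using B by auto
  then have "row B i \<bullet> unit_vec d j = row B i $ j" using j by simp
  then show "(B *\<^sub>v unit_vec d j) $ i = col B j $ i" using B i j by auto
qed (use B in auto)

theorem proposition3p6:
  fixes R :: "('o, 'k::field) kcat"
    and X M N :: "('o, 'k) rmod"
    and f \<alpha> :: "'o \<Rightarrow> 'k mat"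
  assumes "alg_closed TYPE('k)"
    and "locally_bounded R"
    and "in_Mod R X" and "in_mod R M" and "in_mod R N"
    and "is_hom R M N f" and "is_hom R X N \<alpha>"
    and "\<forall>(L :: ('o, 'k) rmod) \<gamma>. in_mod R L \<longrightarrow> is_hom R L X \<gamma> \<longrightarrow>
           (\<exists>h. is_hom R L M h \<and> (\<forall>x. \<alpha> x * \<gamma> x = f x * h x))"
  shows "\<exists>\<beta>. is_hom R X M \<beta> \<and> (\<forall>x. \<alpha> x = f x * \<beta> x)"
proof -
  have R: "is_kcat R" using assms(2) unfolding locally_bounded_def by blast
  have finout: "\<And>x. finite {y. hdim R x y \<noteq> 0}" and finin: "\<And>x. finite {y. hdim R y x \<noteq> 0}"
    using assms(2) unfolding locally_bounded_def by auto
  have X: "in_Mod R X" by fact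
  have MM: "in_Mod R M" and finM: "finite {x. mdim M x \<noteq> 0}" using assms(4) unfolding in_mod_def by auto
  have NN: "in_Mod R N" and finN: "finite {x. mdim N x \<noteq> 0}" using assms(5) unfolding in_mod_def by auto
  define SM where "SM = {x. mdim M x \<noteq> 0}"
  define T where "T = SM \<union> {x. mdim N x \<noteq> 0} \<union> (\<Union>x\<in>SM. {y. hdim R x y \<noteq> 0})"
  have finT: "finite T" unfolding T_def using finM finN finout SM_def by auto
  define W where "W = Wsp R X T"
  define Q where "Q = (\<lambda>z d B. B \<in> carrier_mat (mdim X z) d \<and> (\<forall>v\<in>carrier_vec d. B *\<^sub>v v = 0\<^sub>v (mdim X z) \<longrightarrow> v = 0\<^sub>v d)
     \<and> W z = {B *\<^sub>v v | v. v \<in> carrier_vec d} \<and> (z \<in> T \<longrightarrow> d = mdim X z \<and> B = 1\<^sub>m (mdim X z)))"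
  have ex: "\<exists>d B. Q z d B" for z
  proof (cases "z \<in> T")
    case True
    have "W z = {1\<^sub>m (mdim X z) *\<^sub>v v | v. v \<in> carrier_vec (mdim X z)}"
    proof -
      have "W z = carrier_vec (mdim X z)" unfolding W_def by (rule Wsp_T[OF R X True])
      moreover have "(carrier_vec (mdim X z) :: 'k vec set) = {1\<^sub>m (mdim X z) *\<^sub>v v | v. v \<in> carrier_vec (mdim X z)}"
      proof (intro Set.set_eqI iffI)
        fix u :: "'k vec" assume u: "u \<in> carrier_vec (mdim X z)"
        then have "u = 1\<^sub>m (mdim X z) *\<^sub>v u \<and> u \<in> carrier_vec (mdim X z)" by simp
        then show "u \<in> {1\<^sub>m (mdim X z) *\<^sub>v v | v. v \<in> carrier_vec (mdim X z)}" by blast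
      next
        fix u :: "'k vec" assume "u \<in> {1\<^sub>m (mdim X z) *\<^sub>v v | v. v \<in> carrier_vec (mdim X z)}"
        then show "u \<in> carrier_vec (mdim X z)" by auto
      qed
      ultimately show ?thesis by simp
    qed
    then have "Q z (mdim X z) (1\<^sub>m (mdim X z))" unfolding Q_def by auto
    then show ?thesis by blast
  next
    case False
    have "\<exists>d B. B \<in> carrier_mat (mdim X z) d \<and> (\<forall>v\<in>carrier_vec d. B *\<^sub>v v = 0\<^sub>v (mdim X z) \<longrightarrow> v = 0\<^sub>v d)
     \<and> W z = {B *\<^sub>v v | v. v \<in> carrier_vec d}"
      unfolding W_def
    proof (rule basis_mat)
      show "Wsp R X T z \<subseteq> carrier_vec (mdim X z)" using Wsp_carrier[OF X] by blast
      show "0\<^sub>v (mdim X z) \<in> Wsp R X T z" by (rule Wsp.W0)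
      show "\<And>u w. u \<in> Wsp R X T z \<Longrightarrow> w \<in> Wsp R X T z \<Longrightarrow> u + w \<in> Wsp R X T z" by (rule Wsp.Wadd)
      show "\<And>c w. w \<in> Wsp R X T z \<Longrightarrow> c \<cdot>\<^sub>v w \<in> Wsp R X T z" by (rule Wsp_smult[OF X])
    qed
    then show ?thesis using False unfolding Q_def by blast
  qed
  obtain dd where "\<forall>z. \<exists>B. Q z (dd z) B" using choice[of "\<lambda>z d. \<exists>B. Q z d B"] ex by blast
  then obtain BB where "\<forall>z. Q z (dd z) (BB z)" using choice[of "\<lambda>z B. Q z (dd z) B"] by blast
  then have P: "\<And>z. BB z \<in> carrier_mat (mdim X z) (dd z) \<and>
     (\<forall>v\<in>carrier_vec (dd z). BB z *\<^sub>v v = 0\<^sub>v (mdim X z) \<longrightarrow> v = 0\<^sub>v (dd z))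
     \<and> W z = {BB z *\<^sub>v v | v. v \<in> carrier_vec (dd z)} \<and> (z \<in> T \<longrightarrow> dd z = mdim X z \<and> BB z = 1\<^sub>m (mdim X z))"
    unfolding Q_def by blast
  have Bc: "\<And>z. BB z \<in> carrier_mat (mdim X z) (dd z)" using P by blast
  have Binj: "\<And>z. \<forall>v\<in>carrier_vec (dd z). BB z *\<^sub>v v = 0\<^sub>v (mdim X z) \<longrightarrow> v = 0\<^sub>v (dd z)" using P by blast
  have BW: "\<And>z. W z = {BB z *\<^sub>v v | v. v \<in> carrier_vec (dd z)}" using P by blast
  have BT: "\<And>z. z \<in> T \<Longrightarrow> dd z = mdim X z \<and> BB z = 1\<^sub>m (mdim X z)" using P by blast
  define Lact where "Lact = (\<lambda>z y a. SOME C. C \<in> carrier_mat (dd z) (dd y) \<and> BB z * C = mact X z y a * BB y)"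
  have Lkey: "Lact z y a \<in> carrier_mat (dd z) (dd y) \<and> BB z * Lact z y a = mact X z y a * BB y"
    if a: "a \<in> Hom R z y" for z y a
  proof -
    have A: "mact X z y a * BB y \<in> carrier_mat (mdim X z) (dd y)" using mod_carrier[OF X a] Bc by auto
    have "\<exists>C\<in>carrier_mat (dd z) (dd y). BB z * C = mact X z y a * BB y"
    proof (rule factor_mat[OF Bc A])
      fix j assume j: "j < dd y"
      have "col (BB y) j = BB y *\<^sub>v unit_vec (dd y) j" using mult_unit_col[OF Bc j] by simp
      then have "col (BB y) j \<in> W y" using BW j by auto
      then have "mact X z y a *\<^sub>v col (BB y) j \<in> W z" unfolding W_def using Wsp_act[OF R X a] by blast
      moreover have "col (mact X z y a * BB y) j = mact X z y a *\<^sub>v col (BB y) j"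
        using col_mult2[OF mod_carrier[OF X a] Bc j] .
      ultimately show "\<exists>v\<in>carrier_vec (dd z). col (mact X z y a * BB y) j = BB z *\<^sub>v v"
        using BW by auto
    qed
    then show ?thesis unfolding Lact_def by (rule someI2_bex) auto
  qed
  have Luniq: "Lact z y a = C"
    if a: "a \<in> Hom R z y" and C: "C \<in> carrier_mat (dd z) (dd y)" and eq: "BB z * C = mact X z y a * BB y" for z y a C
  proof (rule inj_mat_cancel[OF Bc Binj])
    show "Lact z y a \<in> carrier_mat (dd z) (dd y)" using Lkey[OF a] by blast
    show "C \<in> carrier_mat (dd z) (dd y)" by fact
    show "BB z * Lact z y a = BB z * C" using Lkey[OF a] eq by simp
  qed
  define L :: "('o,'k) rmod" where "L = \<lparr>mdim = dd, mact = Lact\<rparr>"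
  have LMod: "in_Mod R L"
    unfolding in_Mod_def
  proof (intro conjI allI impI)
    fix x y a assume a: "a \<in> Hom R x y"
    then show "mact L x y a \<in> carrier_mat (mdim L x) (mdim L y)" using Lkey unfolding L_def by simp
  next
    fix x y a a' assume a: "a \<in> Hom R x y" and a': "a' \<in> Hom R x y"
    have aa: "a + a' \<in> Hom R x y" using a a' unfolding Hom_def by auto
    have "BB x * (Lact x y a + Lact x y a') = BB x * Lact x y a + BB x * Lact x y a'"
      using mult_add_distrib_mat[OF Bc[of x], of "Lact x y a" "dd y" "Lact x y a'"] Lkey[OF a] Lkey[OF a'] by blast
    also have "\<dots> = (mact X x y a + mact X x y a') * BB y" using Lkey[OF a] Lkey[OF a']
      using add_mult_distrib_mat[OF mod_carrier[OF X a] mod_carrier[OF X a'] Bc[of y]] by simp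
    also have "\<dots> = mact X x y (a + a') * BB y" using mod_add[OF X a a'] by simp
    finally have "Lact x y (a + a') = Lact x y a + Lact x y a'"
      using Luniq[OF aa] Lkey[OF a] Lkey[OF a'] by auto
    then show "mact L x y (a + a') = mact L x y a + mact L x y a'" unfolding L_def by simp
  next
    fix x y a c assume a: "a \<in> Hom R x y"
    have ca: "c \<cdot>\<^sub>v a \<in> Hom R x y" using a unfolding Hom_def by auto
    have "BB x * (c \<cdot>\<^sub>m Lact x y a) = c \<cdot>\<^sub>m (BB x * Lact x y a)"
      using mult_smult_distrib[OF Bc[of x], of "Lact x y a" "dd y" c] Lkey[OF a] by blast
    also have "\<dots> = c \<cdot>\<^sub>m (mact X x y a) * BB y" using Lkey[OF a]
      using mult_smult_assoc_mat[OF mod_carrier[OF X a] Bc[of y]] by simp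
    also have "\<dots> = mact X x y (c \<cdot>\<^sub>v a) * BB y" using mod_smult[OF X a] by simp
    finally have "Lact x y (c \<cdot>\<^sub>v a) = c \<cdot>\<^sub>m Lact x y a"
      using Luniq[OF ca] Lkey[OF a] by auto
    then show "mact L x y (c \<cdot>\<^sub>v a) = c \<cdot>\<^sub>m mact L x y a" unfolding L_def by simp
  next
    fix x
    have "BB x * 1\<^sub>m (dd x) = mact X x x (idn R x) * BB x"
      using Bc[of x] mod_idn[OF X] by simp
    then have "Lact x x (idn R x) = 1\<^sub>m (dd x)" using Luniq[OF kc_idn[OF R]] by auto
    then show "mact L x x (idn R x) = 1\<^sub>m (mdim L x)" unfolding L_def by simp
  next
    fix x y z a b assume a: "a \<in> Hom R x y" and b: "b \<in> Hom R y z"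
    have ba: "cmp R x y z b a \<in> Hom R x z" using kc_cmp[OF R a b] .
    have ca: "Lact x y a \<in> carrier_mat (dd x) (dd y)" and cb: "Lact y z b \<in> carrier_mat (dd y) (dd z)"
      using Lkey[OF a] Lkey[OF b] by auto
    have "BB x * (Lact x y a * Lact y z b) = (BB x * Lact x y a) * Lact y z b"
      using assoc_mult_mat[OF Bc[of x] ca cb] by simp
    also have "\<dots> = (mact X x y a * BB y) * Lact y z b" using Lkey[OF a] by simp
    also have "\<dots> = mact X x y a * (BB y * Lact y z b)"
      using assoc_mult_mat[OF mod_carrier[OF X a] Bc[of y] cb] by simp
    also have "\<dots> = mact X x y a * (mact X y z b * BB z)" using Lkey[OF b] by simp
    also have "\<dots> = (mact X x y a * mact X y z b) * BB z"
      using assoc_mult_mat[OF mod_carrier[OF X a] mod_carrier[OF X b] Bc[of z]] by simp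
    also have "\<dots> = mact X x z (cmp R x y z b a) * BB z" using mod_cmp[OF X a b] by simp
    finally have "Lact x z (cmp R x y z b a) = Lact x y a * Lact y z b"
      using Luniq[OF ba] ca cb by auto
    then show "mact L x z (cmp R x y z b a) = mact L x y a * mact L y z b" unfolding L_def by simp
  qed
  have finL: "finite {x. dd x \<noteq> 0}"
  proof (rule finite_subset)
    show "finite (T \<union> (\<Union>x\<in>T. {z. hdim R z x \<noteq> 0}))"
      by (rule finite_UnI[OF finT], rule finite_UN_I[OF finT finin])
    show "{x. dd x \<noteq> 0} \<subseteq> T \<union> (\<Union>x\<in>T. {z. hdim R z x \<noteq> 0})"
    proof (rule subsetI, rule ccontr)
      fix z assume z: "z \<in> {x. dd x \<noteq> 0}" and nz: "z \<notin> T \<union> (\<Union>x\<in>T. {z. hdim R z x \<noteq> 0})"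
      have d0: "0 < dd z" using z by auto
      define e where "e = (unit_vec (dd z) 0 :: 'k vec)"
      have u: "e \<in> carrier_vec (dd z)" unfolding e_def by simp
      have "BB z *\<^sub>v e \<in> {BB z *\<^sub>v v | v. v \<in> carrier_vec (dd z)}" using u by blast
      then have inW: "BB z *\<^sub>v e \<in> Wsp R X T z" unfolding W_def[symmetric] BW[symmetric] .
      have hz: "\<forall>x\<in>T. hdim R z x = 0" using nz by blast
      have "BB z *\<^sub>v e = 0\<^sub>v (mdim X z)" by (rule Wsp_zero[OF X hz inW])
      then have "e = 0\<^sub>v (dd z)" using Binj[of z] u by blast
      then have "e $ 0 = (0\<^sub>v (dd z) :: 'k vec) $ 0" by simp
      then have "(1::'k) = 0" using d0 unfolding e_def by simp
      then show False using d0 by simp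
    qed
  qed
  have "mdim L = dd" unfolding L_def by simp
  then have Lmod: "in_mod R L" unfolding in_mod_def using LMod finL by simp
  have gam: "is_hom R L X BB" unfolding is_hom_def L_def using Bc Lkey by simp
  obtain h where h: "is_hom R L M h" and hf: "\<And>x. \<alpha> x * BB x = f x * h x"
    using assms(8) Lmod gam by blast
  have hc: "\<And>x. h x \<in> carrier_mat (mdim M x) (dd x)" using h unfolding is_hom_def L_def by simp
  have hnat: "\<And>x y a. a \<in> Hom R x y \<Longrightarrow> h x * Lact x y a = mact M x y a * h y"
    using h unfolding is_hom_def L_def by simp
  define \<beta> where "\<beta> = (\<lambda>x. if x \<in> T then h x else 0\<^sub>m (mdim M x) (mdim X x))"
  have \<beta>c: "\<And>x. \<beta> x \<in> carrier_mat (mdim M x) (mdim X x)"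
    unfolding \<beta>_def using hc BT by (metis zero_carrier_mat)
  have fc: "\<And>x. f x \<in> carrier_mat (mdim N x) (mdim M x)" using assms(6) unfolding is_hom_def by blast
  have \<alpha>c: "\<And>x. \<alpha> x \<in> carrier_mat (mdim N x) (mdim X x)" using assms(7) unfolding is_hom_def by blast
  have "is_hom R X M \<beta>"
    unfolding is_hom_def
  proof (intro conjI allI impI)
    fix x show "\<beta> x \<in> carrier_mat (mdim M x) (mdim X x)" by (rule \<beta>c)
  next
    fix x y a assume a: "a \<in> Hom R x y"
    show "\<beta> x * mact X x y a = mact M x y a * \<beta> y"
    proof (cases "mdim M x = 0")
      case True
      then show ?thesis using \<beta>c[of x] \<beta>c[of y] mod_carrier[OF X a] mod_carrier[OF MM a]
        by (intro eq_matI) auto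
    next
      case False
      then have xT: "x \<in> T" unfolding T_def SM_def by auto
      show ?thesis
      proof (cases "hdim R x y = 0")
        case True
        then show ?thesis using mod_zero_hom[OF X a] mod_zero_hom[OF MM a] \<beta>c[of x] \<beta>c[of y]
          by simp
      next
        case False
        then have yT: "y \<in> T" using xT \<open>mdim M x \<noteq> 0\<close> unfolding T_def SM_def by auto
        have "BB x * Lact x y a = mact X x y a * BB y" using Lkey[OF a] by simp
        then have "Lact x y a = mact X x y a" using BT[OF xT] BT[OF yT] Lkey[OF a] mod_carrier[OF X a]
          by simp
        then show ?thesis using hnat[OF a] xT yT unfolding \<beta>_def by simp
      qed
    qed
  qed
  moreover have "\<alpha> x = f x * \<beta> x" for x
  proof (cases "x \<in> T")
    case True
    then show ?thesis using hf[of x] BT[OF True] \<alpha>c[of x] unfolding \<beta>_def by simp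
  next
    case False
    then have "mdim N x = 0" unfolding T_def by auto
    then show ?thesis using \<alpha>c[of x] fc[of x] \<beta>c[of x] by (intro eq_matI) auto
  qed
  ultimately show ?thesis by blast
qed

end
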